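(* For every integer $k\ge 2$, $M_k(3)\le 2^k$.
   Context: All graphs are finite and simple. A path $v_1,\ldots,v_r$ in a graph $G$ is degree-monotone if $\deg_G(v_1)\le\cdots\le\deg_G(v_r)$; its order is $r$. Let $mp(G)$ be the maximum order of a degree-monotone path in $G$. For a $k$-edge-coloring of $K_n$ with colors $1,\ldots,k$, let $G_j$ be the spanning subgraph consisting of the edges colored $j$ (degrees taken in $G_j$). $M_k(m)$ is the minimum integer $M$ such that for every $n\ge M$ and every $k$-edge-coloring of $K_n$ there is some $j$ with $mp(G_j)\ge m$. *)

theory Defs
  imports Main
begin

text \<open>A simple graph is given by a vertex set V and a symmetric irreflexive
adjacency relation E (only its restriction to V matters).\<close>

definition deg :: "'a set \<Rightarrow> ('a \<Rightarrow> 'a \<Rightarrow> bool) \<Rightarrow> 'a \<Rightarrow> nat" where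
  "deg V E v = card {u \<in> V. E v u}"

definition is_path :: "'a set \<Rightarrow> ('a \<Rightarrow> 'a \<Rightarrow> bool) \<Rightarrow> 'a list \<Rightarrow> bool" where
  "is_path V E xs \<longleftrightarrow> xs \<noteq> [] \<and> distinct xs \<and> set xs \<subseteq> V \<and>
     (\<forall>i. Suc i < length xs \<longrightarrow> E (xs ! i) (xs ! Suc i))"

definition degree_monotone_path :: "'a set \<Rightarrow> ('a \<Rightarrow> 'a \<Rightarrow> bool) \<Rightarrow> 'a list \<Rightarrow> bool" where
  "degree_monotone_path V E xs \<longleftrightarrow> is_path V E xs \<and> sorted (map (deg V E) xs)"

definition mp :: "'a set \<Rightarrow> ('a \<Rightarrow> 'a \<Rightarrow> bool) \<Rightarrow> nat" where
  "mp V E = Max (insert 0 {length xs | xs. degree_monotone_path V E xs})"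

definition is_k_colouring :: "nat \<Rightarrow> nat \<Rightarrow> (nat \<Rightarrow> nat \<Rightarrow> nat) \<Rightarrow> bool" where
  "is_k_colouring k n c \<longleftrightarrow>
     (\<forall>u<n. \<forall>v<n. u \<noteq> v \<longrightarrow> c u v = c v u \<and> c u v \<in> {1..k})"

definition colour_class :: "(nat \<Rightarrow> nat \<Rightarrow> nat) \<Rightarrow> nat \<Rightarrow> nat \<Rightarrow> nat \<Rightarrow> bool" where
  "colour_class c j u v \<longleftrightarrow> u \<noteq> v \<and> c u v = j"

definition Mk :: "nat \<Rightarrow> nat \<Rightarrow> nat" where
  "Mk k m = (LEAST M. \<forall>n\<ge>M. \<forall>c. is_k_colouring k n c \<longrightarrow>
      (\<exists>j\<in>{1..k}. mp {0..<n} (colour_class c j) \<ge> m))"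

end

theory Submission
  imports Defs
begin

lemma mp_ge3:
  assumes fin: "finite V" and "a\<in>V" "b\<in>V" "x\<in>V" "a\<noteq>b" "b\<noteq>x" "a\<noteq>x"
    "E a b" "E b x" "deg V E a \<le> deg V E b" "deg V E b \<le> deg V E x"
  shows "mp V E \<ge> 3"
proof -
  let ?S = "insert 0 {length xs | xs. degree_monotone_path V E xs}"
  have edges: "\<forall>i. Suc i < length [a,b,x] \<longrightarrow> E ([a,b,x] ! i) ([a,b,x] ! Suc i)"
  proof (intro allI impI)
    fix i assume "Suc i < length [a,b,x]"
    then have "i = 0 \<or> i = 1" by auto
    then show "E ([a,b,x] ! i) ([a,b,x] ! Suc i)"
    proof
      assume "i = 0" then show ?thesis using assms(8) by simp
    next
      assume "i = 1" then show ?thesis using assms(9) by simp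
    qed
  qed
  have "is_path V E [a,b,x]"
    unfolding is_path_def using assms(2-7) edges by simp
  moreover have "sorted (map (deg V E) [a,b,x])" using assms(10,11) by simp
  ultimately have "degree_monotone_path V E [a,b,x]"
    unfolding degree_monotone_path_def by blast
  then have "3 \<in> {length xs | xs. degree_monotone_path V E xs}"
    by (intro CollectI exI[of _ "[a,b,x]"]) (simp add: numeral_3_eq_3)
  then have in3: "3 \<in> ?S" by blast
  have sub: "?S \<subseteq> {..card V}"
  proof
    fix m assume "m \<in> ?S"
    then show "m \<in> {..card V}"
    proof
      assume "m = 0" thus ?thesis by simp
    next
      assume "m \<in> {length xs | xs. degree_monotone_path V E xs}"
      then obtain xs where xs: "m = length xs" "distinct xs" "set xs \<subseteq> V"
        unfolding degree_monotone_path_def is_path_def by blast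
      have "length xs = card (set xs)" using distinct_card[OF xs(2)] by simp
      also have "\<dots> \<le> card V" using card_mono[OF fin xs(3)] .
      finally show ?thesis using xs(1) by simp
    qed
  qed
  have "finite ?S" using finite_subset[OF sub] by simp
  then show ?thesis unfolding mp_def using Max_ge in3 by blast
qed

definition side :: "nat set \<Rightarrow> (nat \<Rightarrow> nat \<Rightarrow> bool) \<Rightarrow> nat \<Rightarrow> bool" where
  "side V E v \<longleftrightarrow> (\<exists>u\<in>V. E v u \<and> (deg V E u < deg V E v \<or> (deg V E u = deg V E v \<and> u < v)))"

locale nop3g =
  fixes V :: "nat set" and E :: "nat \<Rightarrow> nat \<Rightarrow> bool"
  assumes fin: "finite V"
    and sym: "\<And>u v. u\<in>V \<Longrightarrow> v\<in>V \<Longrightarrow> E u v \<Longrightarrow> E v u"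
    and irr: "\<And>u. \<not> E u u"
    and nop3: "\<And>a b x. a\<in>V \<Longrightarrow> b\<in>V \<Longrightarrow> x\<in>V \<Longrightarrow> a\<noteq>b \<Longrightarrow> b\<noteq>x \<Longrightarrow> a\<noteq>x
       \<Longrightarrow> E a b \<Longrightarrow> E b x \<Longrightarrow> deg V E a \<le> deg V E b \<Longrightarrow> deg V E b \<le> deg V E x \<Longrightarrow> False"
begin

abbreviation "d \<equiv> deg V E"

lemma neq: "E u v \<Longrightarrow> u \<noteq> v" using irr by auto

lemma eq_deg:
  assumes "u\<in>V" "v\<in>V" "E u v" "d u = d v" "w\<in>V" "E u w"
  shows "w = v"
proof (rule ccontr)
  assume wv: "w \<noteq> v"
  have "w \<noteq> u" "u \<noteq> v" using neq assms by auto
  show False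
  proof (cases "d w \<le> d u")
    case True
    moreover have "E w u" using sym[of u w] assms by blast
    ultimately show False using nop3[OF assms(5) assms(1) assms(2) \<open>w \<noteq> u\<close> \<open>u \<noteq> v\<close> wv] assms(3,4) by simp
  next
    case False
    moreover have "E v u" using sym[of u v] assms by blast
    ultimately show False using nop3[OF assms(2) assms(1) assms(5)] \<open>w \<noteq> u\<close> \<open>u \<noteq> v\<close> wv assms(4,6) by simp
  qed
qed

lemma deg_one:
  assumes "u\<in>V" "v\<in>V" "E u v" "d u = d v"
  shows "d u = 1"
proof -
  have "{w\<in>V. E u w} = {v}"
  proof
    show "{w\<in>V. E u w} \<subseteq> {v}" using eq_deg[OF assms] by blast
    show "{v} \<subseteq> {w\<in>V. E u w}" using assms by blast
  qed
  then show ?thesis unfolding deg_def by simp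
qed

lemma side_lt:
  assumes "u\<in>V" "v\<in>V" "E u v" "d u < d v"
  shows "side V E v \<and> \<not> side V E u"
proof
  have "E v u" using sym[of u v] assms by blast
  then show "side V E v" unfolding side_def using assms by blast
  show "\<not> side V E u"
  proof
    assume "side V E u"
    then obtain w where w: "w\<in>V" "E u w" "d w < d u \<or> (d w = d u \<and> w < u)"
      unfolding side_def by blast
    show False
    proof (cases "w = v")
      case True then show False using w assms by auto
    next
      case False
      have "w \<noteq> u" "u \<noteq> v" using neq assms w by auto
      moreover have "E w u" using sym[of u w] assms w by blast
      moreover have "d w \<le> d u" using w(3) by auto
      ultimately show False using nop3[OF w(1) assms(1) assms(2)] assms(3,4) False by simp
    qed
  qed
qed

lemma side_diff:
  assumes "u\<in>V" "v\<in>V" "E u v"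
  shows "side V E u \<noteq> side V E v"
proof -
  consider "d u < d v" | "d v < d u" | "d u = d v" by linarith
  then show ?thesis
  proof cases
    case 1 then show ?thesis using side_lt[OF assms] by auto
  next
    case 2 moreover have "E v u" using sym[of u v] assms by blast
    ultimately show ?thesis using side_lt[of v u] assms by auto
  next
    case 3
    have vu: "E v u" using sym[of u v] assms by blast
    have a: "\<And>w. w\<in>V \<Longrightarrow> E u w \<Longrightarrow> w = v" using eq_deg[OF assms 3] by auto
    have b: "\<And>w. w\<in>V \<Longrightarrow> E v w \<Longrightarrow> w = u" using eq_deg[OF assms(2,1) vu] 3 by auto
    have "side V E u \<longleftrightarrow> v < u"
    proof
      assume "side V E u"
      then obtain w where w: "w\<in>V" "E u w" "d w < d u \<or> (d w = d u \<and> w < u)"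
        unfolding side_def by blast
      from a[OF w(1,2)] have "w = v" .
      with w(3) 3 show "v < u" by simp
    next
      assume "v < u" then show "side V E u" unfolding side_def using assms 3 by (intro bexI[of _ v]) simp_all
    qed
    moreover have "side V E v \<longleftrightarrow> u < v"
    proof
      assume "side V E v"
      then obtain w where w: "w\<in>V" "E v w" "d w < d v \<or> (d w = d v \<and> w < v)"
        unfolding side_def by blast
      from b[OF w(1,2)] have "w = u" .
      with w(3) 3 show "u < v" by simp
    next
      assume "u < v" then show "side V E v" unfolding side_def using assms 3 vu by (intro bexI[of _ u]) simp_all
    qed
    moreover have "u \<noteq> v" using neq assms by auto
    ultimately show ?thesis by auto
  qed
qed

lemma side_le:
  assumes "u\<in>V" "v\<in>V" "E u v" "\<not> side V E u"
  shows "d u \<le> d v"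
  using assms unfolding side_def by force

end


lemma pow_ge: "(k::nat) \<ge> 2 \<Longrightarrow> 2 ^ k \<ge> k + 2"
proof (induction k rule: dec_induct)
  case base then show ?case by simp
next
  case (step m) then show ?case by simp
qed

definition flip :: "nat set \<Rightarrow> nat \<Rightarrow> nat set" where
  "flip A j = (if j \<in> A then A - {j} else insert j A)"

lemma main:
  assumes k2: "k \<ge> 2" and nk: "n \<ge> 2 ^ k" and col: "is_k_colouring k n c"
    and nop: "\<forall>j\<in>{1..k}. mp {0..<n} (colour_class c j) < 3"
  shows False
proof -
  define V where "V = {0..<n::nat}"
  have finV: "finite V" unfolding V_def by simp
  have cardV: "card V = n" unfolding V_def by simp
  have loc: "nop3g V (colour_class c j)" if j: "j \<in> {1..k}" for j
  proof
    show "finite V" by (rule finV)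
    show "colour_class c j v u" if "u \<in> V" "v \<in> V" "colour_class c j u v" for u v
      using that col unfolding colour_class_def is_k_colouring_def V_def by auto
    show "\<not> colour_class c j u u" for u unfolding colour_class_def by simp
    show False if "a\<in>V" "b\<in>V" "x\<in>V" "a\<noteq>b" "b\<noteq>x" "a\<noteq>x"
       "colour_class c j a b" "colour_class c j b x"
       "deg V (colour_class c j) a \<le> deg V (colour_class c j) b"
       "deg V (colour_class c j) b \<le> deg V (colour_class c j) x" for a b x
      using mp_ge3[OF finV that] nop j unfolding V_def by fastforce
  qed
  define S where "S j v = side V (colour_class c j) v" for j v
  define D where "D j v = deg V (colour_class c j) v" for j v
  define sig where "sig v = {i\<in>{1..k}. S i v}" for v
  have edge: "c u v \<in> {1..k} \<and> colour_class c (c u v) u v" if "u\<in>V" "v\<in>V" "u\<noteq>v" for u v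
    using that col unfolding colour_class_def is_k_colouring_def V_def by auto
  have sdiff: "S i u \<noteq> S i v" if "i \<in> {1..k}" "u\<in>V" "v\<in>V" "colour_class c i u v" for i u v
    using nop3g.side_diff[OF loc[OF that(1)] that(2-4)] unfolding S_def .
  have sig_inj: "inj_on sig V"
  proof (rule inj_onI)
    fix u v assume uv: "u \<in> V" "v \<in> V" "sig u = sig v"
    show "u = v"
    proof (rule ccontr)
      assume "u \<noteq> v"
      then have "c u v \<in> {1..k}" "colour_class c (c u v) u v" using edge uv by auto
      then have "S (c u v) u \<noteq> S (c u v) v" using sdiff uv by auto
      then have "sig u \<noteq> sig v" using \<open>c u v \<in> {1..k}\<close> unfolding sig_def by blast
      then show False using uv by simp
    qed
  qed
  have sigV: "sig ` V = Pow {1..k}"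
  proof (rule card_seteq)
    show "finite (Pow {1..k})" by simp
    show "sig ` V \<subseteq> Pow {1..k}" unfolding sig_def by auto
    show "card (Pow {1..k}) \<le> card (sig ` V)"
      using card_image[OF sig_inj] cardV nk by (simp add: card_Pow)
  qed
  have partner: "\<exists>p\<in>V. sig p = flip (sig v) j" if "v \<in> V" "j \<in> {1..k}" for v j
  proof -
    have "flip (sig v) j \<in> Pow {1..k}" using that unfolding flip_def sig_def by auto
    then show ?thesis using sigV by (metis imageE)
  qed
  have partner_edge: "colour_class c j v p" if "v \<in> V" "p \<in> V" "j \<in> {1..k}" "sig p = flip (sig v) j" for v j p
  proof -
    have "p \<noteq> v" using that unfolding flip_def by (auto split: if_splits)
    then have e: "c v p \<in> {1..k}" "colour_class c (c v p) v p" using edge that by auto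
    then have "S (c v p) v \<noteq> S (c v p) p" using sdiff that by auto
    then have "c v p = j"
    proof -
      assume ne: "S (c v p) v \<noteq> S (c v p) p"
      show "c v p = j"
      proof (rule ccontr)
        assume "c v p \<noteq> j"
        then have "c v p \<in> sig p \<longleftrightarrow> c v p \<in> sig v" using that(4) unfolding flip_def by auto
        then show False using ne e(1) unfolding sig_def by auto
      qed
    qed
    then show ?thesis using e by simp
  qed
  have allone: "D j v = 1" if j: "j \<in> {1..k}" and v: "v \<in> V" for j v
proof -
    interpret G: nop3g V "colour_class c j" by (rule loc[OF j])
    let ?E = "colour_class c j"
    define L where "L = {v\<in>V. \<not> S j v}"
    define H where "H = {v\<in>V. S j v}"
    define N where "N v = {u\<in>V. ?E v u}" for v
    have finL: "finite L" "finite H" using finV unfolding L_def H_def by auto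
    have finN: "finite (N v)" for v using finV unfolding N_def by auto
    have DN: "D j v = card (N v)" for v unfolding D_def deg_def N_def by simp
    have "\<forall>v\<in>V. \<exists>q. q \<in> V \<and> sig q = flip (sig v) j" using partner[OF _ j] by blast
    from bchoice[OF this] obtain p where p0: "\<forall>v\<in>V. p v \<in> V \<and> sig (p v) = flip (sig v) j" by blast
    then have p: "\<And>v. v \<in> V \<Longrightarrow> p v \<in> V \<and> sig (p v) = flip (sig v) j" by blast
    have pe: "?E v (p v)" if "v \<in> V" for v using partner_edge[of v "p v" j] p that j by auto
    have Sj: "S j v \<longleftrightarrow> j \<in> sig v" for v using j unfolding sig_def by auto
    have pS: "S j (p v) \<longleftrightarrow> \<not> S j v" if "v \<in> V" for v
      using p[OF that] unfolding Sj flip_def by auto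
    have pp: "p (p v) = v" if "v \<in> V" for v
    proof -
      have "sig (p (p v)) = sig v" using p[OF that] p[of "p v"] that
        unfolding flip_def by auto
      moreover have "p (p v) \<in> V" using p[OF that] p[of "p v"] by blast
      ultimately show ?thesis using inj_onD[OF sig_inj] that by blast
    qed
    have injp: "inj_on p L"
    proof (rule inj_onI)
      fix x y assume "x \<in> L" "y \<in> L" "p x = p y"
      then have "p (p x) = p (p y)" "x \<in> V" "y \<in> V" unfolding L_def by auto
      then show "x = y" using pp by metis
    qed
    have pL: "p ` L = H"
    proof
      show "p ` L \<subseteq> H" unfolding L_def H_def using p pS by auto
      show "H \<subseteq> p ` L"
      proof
        fix h assume h: "h \<in> H"
        then have "p h \<in> L" "p (p h) = h" unfolding L_def H_def using p pS pp by auto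
        then show "h \<in> p ` L" by force
      qed
    qed
    have sumH: "(\<Sum>v\<in>L. D j (p v)) = (\<Sum>h\<in>H. D j h)"
      using sum.reindex[OF injp, of "D j"] pL by simp
    have sigL: "(\<Sum>v\<in>L. D j v) = card (SIGMA v:L. N v)" using finL finN DN by simp
    have sigH: "(\<Sum>v\<in>H. D j v) = card (SIGMA v:H. N v)" using finL finN DN by simp
    have swap: "(\<lambda>(a,b). (b,a)) ` (SIGMA v:L. N v) = (SIGMA v:H. N v)"
    proof
      show "(\<lambda>(a,b). (b,a)) ` (SIGMA v:L. N v) \<subseteq> (SIGMA v:H. N v)"
      proof (rule subsetI)
        fix x assume "x \<in> (\<lambda>(a,b). (b,a)) ` (SIGMA v:L. N v)"
        then obtain a b where ab: "x = (b,a)" "a \<in> L" "b \<in> N a" by auto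
        from ab(2,3) have "a \<in> V" "b \<in> V" "?E a b" "\<not> S j a" unfolding L_def N_def by auto
        moreover have "?E b a" using G.sym calculation by blast
        moreover have "S j b" using sdiff[OF j] calculation by blast
        ultimately show "x \<in> (SIGMA v:H. N v)" unfolding H_def N_def ab(1) by auto
      qed
      show "(SIGMA v:H. N v) \<subseteq> (\<lambda>(a,b). (b,a)) ` (SIGMA v:L. N v)"
      proof (rule subsetI)
        fix x assume "x \<in> (SIGMA v:H. N v)"
        then obtain a b where ab: "x = (a,b)" "a \<in> H" "b \<in> N a" by auto
        from ab(2,3) have "a \<in> V" "b \<in> V" "?E a b" "S j a" unfolding H_def N_def by auto
        moreover have "?E b a" using G.sym calculation by blast
        moreover have "\<not> S j b" using sdiff[OF j] calculation by blast
        ultimately have "(b, a) \<in> (SIGMA v:L. N v)" unfolding L_def N_def by auto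
        then show "x \<in> (\<lambda>(a,b). (b,a)) ` (SIGMA v:L. N v)" unfolding ab(1) by force
      qed
    qed
    have "card (SIGMA v:L. N v) = card (SIGMA v:H. N v)"
    proof -
      have "inj_on (\<lambda>(a,b). (b,a)) (SIGMA v:L. N v)" by (auto simp: inj_on_def)
      from card_image[OF this] swap show ?thesis by simp
    qed
    then have bal: "(\<Sum>v\<in>L. D j v) = (\<Sum>v\<in>L. D j (p v))" using sigL sigH sumH by simp
    have le: "\<forall>v\<in>L. D j v \<le> D j (p v)"
      using G.side_le pe p unfolding L_def D_def S_def by auto
    have eq: "D j v = D j (p v)" if "v \<in> L" for v
    proof (rule ccontr)
      assume "D j v \<noteq> D j (p v)"
      then have "D j v < D j (p v)" using le that by force
      then have "(\<Sum>v\<in>L. D j v) < (\<Sum>v\<in>L. D j (p v))"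
        using sum_strict_mono_ex1[OF finL(1) le] that by blast
      then show False using bal by simp
    qed
    have oneL: "D j v = 1" if "v \<in> L" for v
      using G.deg_one[of v "p v"] eq[OF that] pe p that unfolding L_def D_def by auto
    show ?thesis
    proof (cases "S j v")
      case False then show ?thesis using oneL v unfolding L_def by auto
    next
      case True
      then have "p v \<in> L" using p pS v unfolding L_def by auto
      then show ?thesis using oneL eq pp v by metis
    qed
  qed
  have "n \<ge> k + 2" using pow_ge[OF k2] nk by simp
  then have "0 \<in> V" unfolding V_def by simp
  let ?N = "\<lambda>i. {u\<in>V. colour_class c i 0 u}"
  have "{u\<in>V. u \<noteq> 0} = (\<Union>i\<in>{1..k}. ?N i)"
    using edge[OF \<open>0 \<in> V\<close>] unfolding colour_class_def by fastforce
  then have "card {u\<in>V. u \<noteq> 0} = (\<Sum>i\<in>{1..k}. card (?N i))"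
    using card_UN_disjoint[of "{1..k}" ?N] finV unfolding colour_class_def by auto
  also have "\<dots> = (\<Sum>i\<in>{1..k}. 1)"
    using allone \<open>0 \<in> V\<close> unfolding D_def deg_def by simp
  finally have "card {u\<in>V. u \<noteq> 0} = k" by simp
  moreover have "{u\<in>V. u \<noteq> 0} = V - {0}" by auto
  ultimately have "n - 1 = k" using cardV \<open>0 \<in> V\<close> finV by simp
  then show False using \<open>n \<ge> k + 2\<close> by simp
qed

theorem proposition3p4:
  fixes k :: nat
  assumes "k \<ge> 2"
  shows "Mk k 3 \<le> 2 ^ k"
  unfolding Mk_def
proof (rule Least_le, intro allI impI)
  fix n c assume "2 ^ k \<le> n" "is_k_colouring k n c"
  then show "\<exists>j\<in>{1..k}. 3 \<le> mp {0..<n} (colour_class c j)"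
    using main[OF assms] by (meson not_le)
qed

end
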